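(* Let $F_2$ be the free group with basis $\{a,b\}$, let $\mathcal{O}\subseteq\mathbb{N}$ be a set of non-negative integers closed under taking divisors and containing $0$, and let $K_{\mathcal{O}}=\langle b^{-n}a^nb^n : n\in\mathcal{O}\rangle\leqslant F_2$. Then $\mathrm{Ord}_{K_{\mathcal{O}}}(F_2)=\mathcal{O}$, and the rank of $K_{\mathcal{O}}$ equals the cardinality of $\mathcal{O}\setminus\{0\}$.
   Context: Convention: no natural number divides $0$. For a group $G$, a subset $S\subseteq G$ and $g\in G$, $\mathrm{Ord}_S(g)=\min\{k\geq 1: g^k\in S\}$ if such $k$ exists and $0$ otherwise; $\mathrm{Ord}_S(G)=\{\mathrm{Ord}_S(g):g\in G\}$. *)

theory Defs
  imports "HOL-Algebra.Algebra" "HOL-Library.Equipollence"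
begin

text \<open>A letter is a pair (g, e): g = False means generator a, g = True means b;
  e = False means the generator itself, e = True its inverse.\<close>

type_synonym letter = "bool \<times> bool"

definition inv_letter :: "letter \<Rightarrow> letter" where
  "inv_letter l = (fst l, \<not> snd l)"

fun reduced :: "letter list \<Rightarrow> bool" where
  "reduced [] = True"
| "reduced [x] = True"
| "reduced (x # y # ys) = (y \<noteq> inv_letter x \<and> reduced (y # ys))"

definition cancel_cons :: "letter \<Rightarrow> letter list \<Rightarrow> letter list" where
  "cancel_cons x ys = (case ys of [] \<Rightarrow> [x]
      | y # ys' \<Rightarrow> (if y = inv_letter x then ys' else x # ys))"

definition red :: "letter list \<Rightarrow> letter list" where
  "red xs = foldr cancel_cons xs []"

definition F2 :: "letter list monoid" where
  "F2 = \<lparr> carrier = {w. reduced w}, monoid.mult = (\<lambda>x y. red (x @ y)), one = [] \<rparr>"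

definition gen_a :: "letter list" where "gen_a = [(False, False)]"
definition gen_b :: "letter list" where "gen_b = [(True, False)]"

definition Ord_in :: "('a, 'b) monoid_scheme \<Rightarrow> 'a set \<Rightarrow> 'a \<Rightarrow> nat" where
  "Ord_in G S g = (if \<exists>k::nat. k \<ge> 1 \<and> g [^]\<^bsub>G\<^esub> k \<in> S
                    then (LEAST k::nat. k \<ge> 1 \<and> g [^]\<^bsub>G\<^esub> k \<in> S) else 0)"

definition Ord_set :: "('a, 'b) monoid_scheme \<Rightarrow> 'a set \<Rightarrow> nat set" where
  "Ord_set G S = Ord_in G S ` carrier G"

definition K_O :: "nat set \<Rightarrow> letter list set" where
  "K_O Os = generate F2
     {(gen_b [^]\<^bsub>F2\<^esub> (- int n)) \<otimes>\<^bsub>F2\<^esub> (gen_a [^]\<^bsub>F2\<^esub> n) \<otimes>\<^bsub>F2\<^esub> (gen_b [^]\<^bsub>F2\<^esub> n) | n. n \<in> Os}"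

text \<open>"The rank of the subgroup H of G equals the cardinality of X":
  H has a generating set equipotent to X, and X injects into every generating set of H
  (rank = minimal cardinality of a generating set; works for infinite cardinals too).\<close>
definition rank_eq_card :: "('a, 'b) monoid_scheme \<Rightarrow> 'a set \<Rightarrow> 'c set \<Rightarrow> bool" where
  "rank_eq_card G H Xs \<longleftrightarrow>
     (\<exists>S. S \<subseteq> carrier G \<and> generate G S = H \<and> S \<approx> Xs) \<and>
     (\<forall>S. S \<subseteq> carrier G \<and> generate G S = H \<longrightarrow> Xs \<lesssim> S)"

end

theory Submission imports Defs begin

abbreviation "la \<equiv> (False,False)"
abbreviation "la' \<equiv> (False,True)"
abbreviation "lb \<equiv> (True,False)"
abbreviation "lb' \<equiv> (True,True)"

definition invw :: "letter list \<Rightarrow> letter list" where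
  "invw w = rev (map inv_letter w)"

lemma inv_letter_inv[simp]: "inv_letter (inv_letter x) = x"
  by (simp add: inv_letter_def)
lemma inv_letter_neq[simp]: "inv_letter x \<noteq> x" "x \<noteq> inv_letter x"
  by (auto simp: inv_letter_def prod_eq_iff)
lemma inv_letter_eq_iff[simp]: "inv_letter x = inv_letter y \<longleftrightarrow> x = y"
  by (metis inv_letter_inv)

lemma invw_simps[simp]: "invw [] = []" "invw (x # xs) = invw xs @ [inv_letter x]"
  "invw (xs @ ys) = invw ys @ invw xs" "invw (invw xs) = xs"
  by (auto simp: invw_def rev_map[symmetric] comp_def)

lemma invw_Nil_iff[simp]: "invw u = [] \<longleftrightarrow> u = []"
  by (simp add: invw_def)

lemma reduced_cons: "reduced (x # xs) \<longleftrightarrow> reduced xs \<and> (xs = [] \<or> hd xs \<noteq> inv_letter x)"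
  by (cases xs) auto

lemma reduced_append: "reduced (xs @ ys) \<longleftrightarrow> reduced xs \<and> reduced ys \<and>
   (xs = [] \<or> ys = [] \<or> hd ys \<noteq> inv_letter (last xs))"
  by (induction xs rule: reduced.induct) (auto simp: reduced_cons)

lemma reduced_invw: "reduced (invw xs) = reduced xs"
proof (induction xs rule: reduced.induct)
  case (3 x y ys)
  then show ?case
    by (cases ys) (auto simp: reduced_append)
qed (auto)

lemma cancel_cons_reduced: "reduced ys \<Longrightarrow> reduced (cancel_cons x ys)"
  by (cases ys) (auto simp: cancel_cons_def reduced_cons)

lemma foldr_reduced: "reduced z \<Longrightarrow> reduced (foldr cancel_cons xs z)"
  by (induction xs) (auto simp: cancel_cons_reduced)

lemma reduced_red[simp]: "reduced (red xs)"
  unfolding red_def by (rule foldr_reduced) simp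

lemma red_Cons: "red (x # xs) = cancel_cons x (red xs)"
  by (simp add: red_def)

lemma red_Nil[simp]: "red [] = []"
  by (simp add: red_def)

lemma red_reduced: "reduced xs \<Longrightarrow> red xs = xs"
  by (induction xs rule: reduced.induct) (auto simp: red_Cons cancel_cons_def)

lemma cancel_inv: "reduced ys \<Longrightarrow> cancel_cons (inv_letter x) (cancel_cons x ys) = ys"
  by (cases ys) (auto simp: cancel_cons_def reduced_cons split: list.splits)

lemma foldr_cancel_step:
  assumes "reduced r" "reduced z"
  shows "foldr cancel_cons (cancel_cons x r) z = cancel_cons x (foldr cancel_cons r z)"
proof (cases r)
  case Nil then show ?thesis by (simp add: cancel_cons_def)
next
  case (Cons y r')
  show ?thesis
  proof (cases "y = inv_letter x")
    case True
    have "reduced (foldr cancel_cons r' z)" using assms Cons by (auto intro: foldr_reduced simp: reduced_cons)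
    then show ?thesis using Cons True cancel_inv[of "foldr cancel_cons r' z" "inv_letter x"]
      by (simp add: cancel_cons_def)
  next
    case False then show ?thesis using Cons by (simp add: cancel_cons_def)
  qed
qed

lemma foldr_red: "reduced z \<Longrightarrow> foldr cancel_cons xs z = foldr cancel_cons (red xs) z"
proof (induction xs)
  case Nil then show ?case by (simp add: red_def)
next
  case (Cons x xs)
  then show ?case by (simp add: red_Cons foldr_cancel_step)
qed

lemma red_append: "red (xs @ ys) = foldr cancel_cons xs (red ys)"
  by (simp add: red_def)

lemma red_red_left: "red (red xs @ ys) = red (xs @ ys)"
  by (simp add: red_append foldr_red[symmetric])

lemma red_red_right: "red (xs @ red ys) = red (xs @ ys)"
  by (simp add: red_append red_reduced)

lemma foldr_inv_cancel: "reduced z \<Longrightarrow> foldr cancel_cons (xs @ invw xs) z = z"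
proof (induction xs arbitrary: z)
  case (Cons x xs)
  have "reduced (cancel_cons (inv_letter x) z)" using Cons by (simp add: cancel_cons_reduced)
  then show ?case using Cons cancel_inv[of z "inv_letter x"] by simp
qed simp

lemma red_cancel_mid: "red (xs @  invw ys @ ys @ zs) = red (xs @  zs)"
proof -
  have "red (invw ys @ ys @ zs) = red zs"
    using foldr_inv_cancel[of "red zs" "invw ys"] by (simp add: red_append[of "invw ys @ ys", simplified])
  then show ?thesis
    by (metis red_red_right)
qed

lemma red_cancel_mid': "red (xs @  ys @ invw ys @ zs) = red (xs @  zs)"
  using red_cancel_mid[of xs "invw ys" zs] by simp

lemma red_inv_self: "red (ys @ invw ys) = []"
  using red_cancel_mid'[of "[]" ys "[]"] by (simp add: red_def)

lemma F2_simps[simp]: "carrier F2 = {w. reduced w}" "x \<otimes>\<^bsub>F2\<^esub> y = red (x @ y)" "\<one>\<^bsub>F2\<^esub> = []"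
  by (auto simp: F2_def)

lemma group_F2: "group F2"
proof (rule groupI)
  fix x y z assume "x \<in> carrier F2" "y \<in> carrier F2" "z \<in> carrier F2"
  then show "x \<otimes>\<^bsub>F2\<^esub> y \<otimes>\<^bsub>F2\<^esub> z = x \<otimes>\<^bsub>F2\<^esub> (y \<otimes>\<^bsub>F2\<^esub> z)"
    by (simp add: red_red_left red_red_right)
next
  fix x assume "x \<in> carrier F2"
  then show "\<exists>y\<in>carrier F2. y \<otimes>\<^bsub>F2\<^esub> x = \<one>\<^bsub>F2\<^esub>"
    by (intro bexI[of _ "invw x"]) (auto simp: reduced_invw red_inv_self[of "invw x", simplified])
qed (auto simp: red_reduced)

interpretation F: group F2 by (rule group_F2)

lemma inv_F2: "reduced x \<Longrightarrow> inv\<^bsub>F2\<^esub> x = invw x"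
  by (rule F.inv_equality) (auto simp: reduced_invw red_inv_self[of "invw x", simplified])

definition cpow :: "nat \<Rightarrow> letter list \<Rightarrow> letter list" where
  "cpow k c = concat (replicate k c)"

definition cyc :: "letter list \<Rightarrow> bool" where
  "cyc c \<longleftrightarrow> c \<noteq> [] \<and> reduced c \<and> hd c \<noteq> inv_letter (last c)"

lemma cpow_Suc: "cpow (Suc k) c = c @ cpow k c"
  by (simp add: cpow_def)

lemma cpow_hd_last: "k \<ge> 1 \<Longrightarrow> c \<noteq> [] \<Longrightarrow> cpow k c \<noteq> [] \<and> hd (cpow k c) = hd c \<and> last (cpow k c) = last c"
proof (induction k)
  case (Suc k) then show ?case by (cases k) (auto simp: cpow_Suc cpow_def)
qed simp

lemma reduced_cpow: "cyc c \<Longrightarrow> reduced (cpow k c)"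
proof (induction k)
  case 0 then show ?case by (simp add: cpow_def)
next
  case (Suc k)
  then show ?case using cpow_hd_last[of k c]
    by (cases "k = 0") (auto simp: cpow_Suc reduced_append cyc_def cpow_def)
qed

lemma reduced_conj_cpow:
  assumes "reduced (u @ c @ invw u)" "cyc c" "k \<ge> 1"
  shows "reduced (u @ cpow k c @ invw u)"
proof -
  have "reduced u" "reduced (invw u)" "u = [] \<or> hd c \<noteq> inv_letter (last u)"
    "u = [] \<or> hd (invw u) \<noteq> inv_letter (last c)"
    using assms by (auto simp: reduced_append cyc_def)
  then show ?thesis using cpow_hd_last[of k c] reduced_cpow[of c k] assms
    by (auto simp: reduced_append cyc_def)
qed

lemma pow_conj:
  assumes "reduced (u @ c @ invw u)" "cyc c" "k \<ge> 1"
  shows "(u @ c @ invw u) [^]\<^bsub>F2\<^esub> k = u @ cpow k c @ invw u"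
  using assms(3)
proof (induction k rule: dec_induct)
  case base
  then show ?case using assms by (simp add: red_reduced cpow_def)
next
  case (step k)
  have "(u @ c @ invw u) [^]\<^bsub>F2\<^esub> Suc k = (u @ c @ invw u) \<otimes>\<^bsub>F2\<^esub> ((u @ c @ invw u) [^]\<^bsub>F2\<^esub> k)"
    using assms by (intro F.nat_pow_Suc2) simp
  also have "\<dots> = red ((u @ c) @ invw u @ u @ cpow k c @ invw u)" using step by simp
  also have "\<dots> = red (u @ cpow (Suc k) c @ invw u)" by (simp only: red_cancel_mid) (simp add: cpow_Suc)
  also have "\<dots> = u @ cpow (Suc k) c @ invw u"
    using reduced_conj_cpow[OF assms(1,2), of "Suc k"] by (simp add: red_reduced)
  finally show ?case .
qed

lemma cyc_decomp:
  "reduced g \<Longrightarrow> g \<noteq> [] \<Longrightarrow> \<exists>u c. g = u @ c @ invw u \<and> cyc c"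
proof (induction "length g" arbitrary: g rule: less_induct)
  case less
  show ?case
  proof (cases "hd g = inv_letter (last g)")
    case False
    then show ?thesis using less by (intro exI[of _ "[]"] exI[of _ g]) (simp add: cyc_def)
  next
    case True
    obtain x r where g: "g = x # r" using less by (cases g) auto
    have "r \<noteq> []" using True g by auto
    then obtain m y where r: "r = m @ [y]" by (metis rev_exhaust)
    have y: "y = inv_letter x" using True g r by simp
    have "m \<noteq> []" using less(2) g r y by auto
    have "reduced m" using less(2) g r by (auto simp: reduced_cons reduced_append)
    then obtain u c where "m = u @ c @ invw u" "cyc c"
      using less(1)[of m] \<open>m \<noteq> []\<close> g r by auto
    then show ?thesis using g r y
      by (intro exI[of _ "x # u"] exI[of _ c]) simp
  qed
qed

lemma invw_replicate[simp]: "invw (replicate n x) = replicate n (inv_letter x)"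
  by (induction n) (auto simp: replicate_append_same)

lemma reduced_replicate: "x \<noteq> inv_letter x \<Longrightarrow> reduced (replicate n x)"
  by (induction n) (auto simp: reduced_cons)

lemma cpow_single: "cpow k [x] = replicate k x"
  by (induction k) (auto simp: cpow_Suc, simp add: cpow_def)

lemma pow_letter: "[x] [^]\<^bsub>F2\<^esub> k = replicate k x"
proof (cases "k = 0")
  case True then show ?thesis by simp
next
  case False
  then show ?thesis using pow_conj[of "[]" "[x]" k] by (simp add: cyc_def cpow_single)
qed

definition genw :: "nat \<Rightarrow> letter list" where
  "genw n = replicate n lb' @ replicate n la @ replicate n lb"

lemma inv_la[simp]: "inv_letter la = la'" "inv_letter la' = la" "inv_letter lb = lb'" "inv_letter lb' = lb"
  by (auto simp: inv_letter_def)

lemma reduced_genw: "reduced (genw n)"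
  by (cases "n=0") (simp_all add: genw_def reduced_append reduced_replicate inv_letter_def)

lemma genw_eq: "(gen_b [^]\<^bsub>F2\<^esub> (- int n)) \<otimes>\<^bsub>F2\<^esub> (gen_a [^]\<^bsub>F2\<^esub> n) \<otimes>\<^bsub>F2\<^esub> (gen_b [^]\<^bsub>F2\<^esub> n) = genw n"
proof -
  have "gen_b [^]\<^bsub>F2\<^esub> (- int n) = inv\<^bsub>F2\<^esub> (replicate n lb)"
    by (simp add: F.int_pow_neg_int gen_b_def pow_letter)
  also have "\<dots> = replicate n lb'"
    by (simp add: inv_F2 reduced_replicate inv_letter_def)
  finally show ?thesis
    by (simp add: gen_a_def gen_b_def pow_letter red_red_left reduced_genw[unfolded genw_def] red_reduced genw_def)
qed

lemma K_O_eq: "K_O Os = generate F2 (genw ` Os)"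
proof -
  have "K_O Os = generate F2 {genw n | n. n \<in> Os}"
    unfolding K_O_def genw_eq ..
  also have "{genw n | n. n \<in> Os} = genw ` Os" by auto
  finally show ?thesis .
qed

section \<open>The graph\<close>

definition Mv :: "nat set \<Rightarrow> nat \<Rightarrow> bool" where "Mv Os i \<longleftrightarrow> (\<exists>n\<in>Os. i \<le> n)"

fun delta :: "nat set \<Rightarrow> nat \<times> nat \<Rightarrow> letter \<Rightarrow> (nat \<times> nat) option" where
  "delta Os (i,j) (True,True) = (if j = 0 \<and> Mv Os (Suc i) then Some (Suc i, 0) else None)"
| "delta Os (i,j) (True,False) = (if j = 0 \<and> 0 < i \<and> Mv Os i then Some (i - 1, 0) else None)"
| "delta Os (i,j) (False,False) = (if i \<in> Os \<and> 0 < i \<and> j < i then Some (i, Suc j mod i) else None)"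
| "delta Os (i,j) (False,True) = (if i \<in> Os \<and> 0 < i \<and> j < i then Some (i, (j + i - 1) mod i) else None)"

fun cl :: "nat \<times> nat \<Rightarrow> letter \<Rightarrow> nat \<Rightarrow> bool" where
  "cl (i,j) (False,False) = (\<lambda>k. k = i \<and> Suc j = i)"
| "cl (i,j) (False,True) = (\<lambda>k. k = i \<and> j = 0)"
| "cl (i,j) (True,e) = (\<lambda>k. False)"

fun walk :: "nat set \<Rightarrow> nat \<times> nat \<Rightarrow> letter list \<Rightarrow> (nat \<times> nat) option" where
  "walk Os v [] = Some v"
| "walk Os v (x # xs) = (case delta Os v x of None \<Rightarrow> None | Some w \<Rightarrow> walk Os w xs)"

fun par :: "nat set \<Rightarrow> nat \<times> nat \<Rightarrow> letter list \<Rightarrow> nat \<Rightarrow> bool" where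
  "par Os v [] = (\<lambda>k. False)"
| "par Os v (x # xs) = (case delta Os v x of None \<Rightarrow> (\<lambda>k. False)
      | Some w \<Rightarrow> (\<lambda>k. cl v x k \<noteq> par Os w xs k))"

lemma mod_aux1: "j < (i::nat) \<Longrightarrow> (Suc j mod i + i - 1) mod i = j"
proof (cases "Suc j = i")
  case True then show ?thesis by simp
next
  case False
  assume "j < i"
  then have "Suc j < i" using False by simp
  then show ?thesis by simp
qed

lemma mod_aux5: "0 < j \<Longrightarrow> j < (i::nat) \<Longrightarrow> (j + i - 1) mod i = j - 1"
proof -
  assume "0 < j" "j < i"
  then obtain j' where j: "j = Suc j'" by (cases j) auto
  then show ?thesis using \<open>j < i\<close> by simp
qed

lemma mod_aux2: "j < (i::nat) \<Longrightarrow> Suc ((j + i - 1) mod i) mod i = j"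
proof (cases "j = 0")
  case True
  assume "j < i"
  then show ?thesis using True by (cases i) auto
next
  case False
  assume "j < i"
  then show ?thesis using False mod_aux5[of j i] by simp
qed

lemma mod_aux3: "j < (i::nat) \<Longrightarrow> Suc j mod i = 0 \<longleftrightarrow> Suc j = i"
proof -
  assume a: "j < i"
  show ?thesis
  proof (cases "Suc j = i")
    case True then show ?thesis by simp
  next
    case False then have "Suc j < i" using a by simp
    then show ?thesis by simp
  qed
qed

lemma mod_aux4: "j < (i::nat) \<Longrightarrow> Suc ((j + i - 1) mod i) = i \<longleftrightarrow> j = 0"
proof (cases "j = 0")
  case True
  assume "j < i"
  then show ?thesis using True by (cases i) auto
next
  case False
  assume "j < i"
  then show ?thesis using False mod_aux5[of j i] by simp
qed

lemma mod_aux1': "j < (i::nat) \<Longrightarrow> (Suc j mod i + i - Suc 0) mod i = j"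
  using mod_aux1 by simp
lemma mod_aux2': "j < (i::nat) \<Longrightarrow> Suc ((j + i - Suc 0) mod i) mod i = j"
  using mod_aux2 by simp
lemma mod_aux4': "j < (i::nat) \<Longrightarrow> Suc ((j + i - Suc 0) mod i) = i \<longleftrightarrow> j = 0"
  using mod_aux4 by simp

lemma delta_inv: "delta Os v x = Some w \<Longrightarrow> delta Os w (inv_letter x) = Some v"
  by (cases v; cases x; rename_tac e1 e2; case_tac e1; case_tac e2)
     (auto simp: inv_letter_def mod_aux1' mod_aux2' split: if_splits)

lemma cl_inv: "delta Os v x = Some w \<Longrightarrow> cl w (inv_letter x) = cl v x"
  by (cases v; cases x; rename_tac e1 e2; case_tac e1; case_tac e2)
     (auto simp: inv_letter_def mod_aux3 mod_aux4' split: if_splits)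

lemma walk_append: "walk Os v (xs @ ys) = (case walk Os v xs of None \<Rightarrow> None | Some w \<Rightarrow> walk Os w ys)"
  by (induction xs arbitrary: v) (auto split: option.splits)

lemma par_append: "walk Os v xs = Some w \<Longrightarrow> par Os v (xs @ ys) k = (par Os v xs k \<noteq> par Os w ys k)"
  by (induction xs arbitrary: v) (auto split: option.splits)

lemma walk_inv: "walk Os v xs = Some w \<Longrightarrow> walk Os w (invw xs) = Some v \<and> par Os w (invw xs) = par Os v xs"
proof (induction xs arbitrary: v)
  case (Cons x xs)
  then obtain v1 where d: "delta Os v x = Some v1" and r: "walk Os v1 xs = Some w"
    by (auto split: option.splits)
  from Cons.IH[OF r] have ih: "walk Os w (invw xs) = Some v1" "par Os w (invw xs) = par Os v1 xs" by auto
  have "walk Os w (invw (x # xs)) = Some v"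
    using ih d by (simp add: walk_append delta_inv)
  moreover have "par Os w (invw (x # xs)) = par Os v (x # xs)"
  proof
    fix k show "par Os w (invw (x # xs)) k = par Os v (x # xs) k"
      using ih d r by (auto simp: par_append delta_inv cl_inv)
  qed
  ultimately show ?case by blast
qed simp

lemma walk_red: "walk Os v xs = Some w \<Longrightarrow> walk Os v (red xs) = Some w \<and> par Os v (red xs) = par Os v xs"
proof (induction xs arbitrary: v)
  case (Cons x xs)
  then obtain v1 where d: "delta Os v x = Some v1" and r: "walk Os v1 xs = Some w"
    by (auto split: option.splits)
  from Cons.IH[OF r] have ih: "walk Os v1 (red xs) = Some w" "par Os v1 (red xs) = par Os v1 xs" by auto
  show ?case
  proof (cases "\<exists>r. red xs = inv_letter x # r")
    case True
    then obtain r where rr: "red xs = inv_letter x # r" by auto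
    have d2: "delta Os v1 (inv_letter x) = Some v" using d by (rule delta_inv)
    have "red (x # xs) = r" using rr by (simp add: red_Cons cancel_cons_def)
    moreover have "walk Os v r = Some w" using ih rr d2 by simp
    moreover have "par Os v r = par Os v (x # xs)"
    proof
      fix k show "par Os v r k = par Os v (x # xs) k"
        using ih rr d2 d cl_inv[OF d] by (auto dest: fun_cong[where x=k])
    qed
    ultimately show ?thesis by simp
  next
    case False
    then have "red (x # xs) = x # red xs"
      by (auto simp: red_Cons cancel_cons_def split: list.splits)
    then show ?thesis using ih d by simp
  qed
qed simp

lemma walk_inj: "walk Os v xs = Some w \<Longrightarrow> walk Os v' xs = Some w \<Longrightarrow> v = v'"
proof -
  assume a: "walk Os v xs = Some w" "walk Os v' xs = Some w"
  have "walk Os w (invw xs) = Some v" "walk Os w (invw xs) = Some v'"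
    using walk_inv[OF a(1)] walk_inv[OF a(2)] by auto
  then show ?thesis by simp
qed

definition bs :: "letter \<Rightarrow> int" where
  "bs x = (if x = lb' then 1 else if x = lb then -1 else 0)"

lemma walk_lev: "walk Os v xs = Some w \<Longrightarrow> int (fst w) = int (fst v) + sum_list (map bs xs)"
proof (induction xs arbitrary: v)
  case (Cons x xs)
  then obtain v1 where d: "delta Os v x = Some v1" and r: "walk Os v1 xs = Some w"
    by (auto split: option.splits)
  have "int (fst v1) = int (fst v) + bs x" using d
    by (cases v; cases x; rename_tac e1 e2; case_tac e1; case_tac e2) (auto simp: bs_def split: if_splits)
  then show ?case using Cons.IH[OF r] by simp
qed simp

section \<open>Membership\<close>

definition Lc :: "nat set \<Rightarrow> letter list set" where
  "Lc Os = {w. reduced w \<and> walk Os (0,0) w = Some (0,0)}"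

abbreviation KK :: "nat set \<Rightarrow> letter list set" where
  "KK Os \<equiv> generate F2 (genw ` Os)"

lemma genw_carrier: "genw ` Os \<subseteq> carrier F2"
  using reduced_genw by auto

lemma KK_subgroup: "subgroup (KK Os) F2"
  by (rule F.generate_is_subgroup[OF genw_carrier])

lemma genw_in_KK: "n \<in> Os \<Longrightarrow> genw n \<in> KK Os"
  by (auto intro: generate.incl)

lemma invw_genw_in_KK: "n \<in> Os \<Longrightarrow> invw (genw n) \<in> KK Os"
  using subgroup.m_inv_closed[OF KK_subgroup genw_in_KK] inv_F2[OF reduced_genw] by metis

lemma one_in_KK: "[] \<in> KK Os"
  using generate.one[of F2 "genw ` Os"] by simp

lemma mult_in_KK: "x \<in> KK Os \<Longrightarrow> y \<in> KK Os \<Longrightarrow> red (x @ y) \<in> KK Os"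
  using subgroup.m_closed[OF KK_subgroup] by fastforce

lemma Lc_subgroup: "subgroup (Lc Os) F2"
proof (rule F.subgroupI)
  show "Lc Os \<subseteq> carrier F2" by (auto simp: Lc_def)
  show "Lc Os \<noteq> {}" by (auto simp: Lc_def intro!: exI[of _ "[]"])
next
  fix a assume "a \<in> Lc Os"
  then show "inv\<^bsub>F2\<^esub> a \<in> Lc Os"
    using walk_inv[of Os "(0,0)" a "(0,0)"] by (auto simp: Lc_def inv_F2 reduced_invw)
next
  fix a b assume "a \<in> Lc Os" "b \<in> Lc Os"
  then show "a \<otimes>\<^bsub>F2\<^esub> b \<in> Lc Os"
    using walk_red[of Os "(0,0)" "a @ b" "(0,0)"] by (auto simp: Lc_def walk_append)
qed

lemma Mv_mono: "Mv Os m \<Longrightarrow> i \<le> m \<Longrightarrow> Mv Os i"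
  unfolding Mv_def by (meson order_trans)

lemma walk_up: "Mv Os (i + k) \<Longrightarrow> walk Os (i,0) (replicate k lb') = Some (i + k, 0)"
proof (induction k arbitrary: i)
  case (Suc k)
  have m: "Mv Os (Suc i)" using Suc.prems by (rule Mv_mono) simp
  have d: "delta Os (i,0) lb' = Some (Suc i, 0)" using m by simp
  have m2: "Mv Os (Suc i + k)" using Suc.prems by simp
  have r: "walk Os (Suc i, 0) (replicate k lb') = Some (Suc i + k, 0)" by (rule Suc.IH[OF m2])
  show ?case using d r by simp
qed simp

lemma walk_down: "Mv Os m \<Longrightarrow> k \<le> m \<Longrightarrow> walk Os (m,0) (replicate k lb) = Some (m - k, 0)"
proof (induction k arbitrary: m)
  case (Suc k)
  then obtain m' where m: "m = Suc m'" by (cases m) auto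
  have M: "Mv Os m'" using Suc.prems(1) unfolding m by (rule Mv_mono) simp
  have d: "delta Os (Suc m',0) lb = Some (m', 0)" using Suc.prems(1) unfolding m by simp
  have r: "walk Os (m',0) (replicate k lb) = Some (m' - k, 0)"
    using Suc.IH[OF M] Suc.prems(2) unfolding m by simp
  show ?case unfolding m using d r by simp
qed simp

lemma walk_a: "n \<in> Os \<Longrightarrow> 0 < n \<Longrightarrow> j < n \<Longrightarrow> walk Os (n,j) (replicate k la) = Some (n, (j + k) mod n)"
proof (induction k arbitrary: j)
  case (Suc k)
  then show ?case using Suc.IH[of "Suc j mod n"] by (simp add: mod_add_left_eq)
qed simp

lemma genw_in_Lc: "n \<in> Os \<Longrightarrow> genw n \<in> Lc Os"
proof (cases "n = 0")
  case False
  assume n: "n \<in> Os"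
  have M: "Mv Os n" using n by (auto simp: Mv_def)
  have "walk Os (0,0) (genw n) = Some (0,0)"
    using walk_up[of Os 0 n] M walk_a[of n Os 0 n] walk_down[of Os n n] n False
    by (simp add: genw_def walk_append)
  then show ?thesis by (simp add: Lc_def reduced_genw)
qed (simp add: Lc_def genw_def)

lemma KK_sub_Lc: "KK Os \<subseteq> Lc Os"
  by (rule F.generate_subgroup_incl[OF _ Lc_subgroup]) (auto simp: genw_in_Lc)

definition tw :: "nat \<times> nat \<Rightarrow> letter list" where
  "tw v = replicate (fst v) lb' @ replicate (snd v) la"

lemma edge_b':
  assumes "delta Os (i,j) lb' = Some w"
  shows "red (tw (i,j) @ [lb'] @ invw (tw w)) \<in> KK Os"
proof -
  have "w = (Suc i, 0)" "j = 0" using assms by (auto split: if_splits)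
  then have "tw (i,j) @ [lb'] @ invw (tw w) = tw w @ invw (tw w)"
    by (simp add: tw_def replicate_append_same)
  then show ?thesis by (metis red_inv_self one_in_KK append_Nil2)
qed

lemma edge_b:
  assumes "delta Os (i,j) lb = Some w"
  shows "red (tw (i,j) @ [lb] @ invw (tw w)) \<in> KK Os"
proof -
  have w: "w = (i - 1, 0)" "j = 0" "0 < i" using assms by (auto split: if_splits)
  then have "replicate i lb' = replicate (i - 1) lb' @ [lb']"
  proof -
    obtain i' where "i = Suc i'" using w by (cases i) auto
    then show ?thesis by (simp add: replicate_append_same)
  qed
  then have "tw (i,j) = tw w @ [lb']" using w
    by (simp add: tw_def)
  then have "tw (i,j) @ [lb] @ invw (tw w) = tw w @ [lb'] @ invw [lb'] @ invw (tw w) @ []"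
    by simp
  then have "red (tw (i,j) @ [lb] @ invw (tw w)) = red (tw w @ invw (tw w) @ [])"
    by (simp only: red_cancel_mid')
  then show ?thesis by (metis red_inv_self one_in_KK append_Nil2)
qed

lemma edge_a_facts:
  assumes "delta Os (i,j) la = Some w"
  shows "i \<in> Os" "0 < i" "j < i" "w = (i, Suc j mod i)"
proof -
  have d: "(if i \<in> Os \<and> 0 < i \<and> j < i then Some (i, Suc j mod i) else None) = Some w"
    using assms by simp
  then show "i \<in> Os" "0 < i" "j < i" "w = (i, Suc j mod i)"
    by (auto split: if_splits)
qed

lemma edge_a:
  assumes "delta Os (i,j) la = Some w"
  shows "red (tw (i,j) @ [la] @ invw (tw w)) \<in> KK Os"
proof -
  note io = edge_a_facts[OF assms]
  show ?thesis
  proof (cases "Suc j = i")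
    case True
    have w0: "w = (i, 0)" using io(4) True by simp
    have r: "replicate j la @ [la] = replicate i la"
      using True[symmetric] by (simp add: replicate_append_same)
    have eq: "tw (i,j) @ [la] @ invw (tw w) = genw i"
      using r w0 by (simp add: tw_def genw_def)
    show ?thesis unfolding eq red_reduced[OF reduced_genw] by (rule genw_in_KK[OF io(1)])
  next
    case False
    have "Suc j < i" using io(3) False by simp
    then have w1: "w = (i, Suc j)" using io(4) by simp
    have eq: "tw (i,j) @ [la] @ invw (tw w) = tw w @ invw (tw w)"
      unfolding w1 by (simp add: tw_def replicate_append_same)
    show ?thesis unfolding eq red_inv_self by (rule one_in_KK)
  qed
qed

lemma edge_a':
  assumes "delta Os (i,j) la' = Some w"
  shows "red (tw (i,j) @ [la'] @ invw (tw w)) \<in> KK Os"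
proof -
  have io: "i \<in> Os" "0 < i" "j < i" and w: "w = (i, (j + i - 1) mod i)" using assms by (auto split: if_splits)
  show ?thesis
  proof (cases "j = 0")
    case True
    then have w': "w = (i, i - 1)" using w io by simp
    have r: "replicate i la' = la' # replicate (i - 1) la'"
    proof -
      obtain i' where "i = Suc i'" using io by (cases i) auto
      then show ?thesis by simp
    qed
    have "tw (i,j) @ [la'] @ invw (tw w) = replicate i lb' @ (la' # replicate (i - 1) la') @ replicate i lb"
      using w' True by (simp add: tw_def)
    also have "\<dots> = invw (genw i)"
      using r by (simp add: genw_def)
    finally have "tw (i,j) @ [la'] @ invw (tw w) = invw (genw i)" .
    then show ?thesis using io reduced_genw[of i]
      by (simp add: red_reduced reduced_invw invw_genw_in_KK)
  next
    case False
    have "(j + i - 1) mod i = j - 1" using False io by (intro mod_aux5) auto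
    then have w': "w = (i, j - 1)" using w by simp
    have "replicate j la = replicate (j - 1) la @ [la]"
    proof -
      obtain j' where "j = Suc j'" using False by (cases j) auto
      then show ?thesis by (simp add: replicate_append_same)
    qed
    then have "tw (i,j) = tw w @ [la]" using w' by (simp add: tw_def)
    then have "tw (i,j) @ [la'] @ invw (tw w) = tw w @ [la] @ invw [la] @ invw (tw w) @ []"
      by simp
    then have "red (tw (i,j) @ [la'] @ invw (tw w)) = red (tw w @ invw (tw w) @ [])"
      by (simp only: red_cancel_mid')
    then show ?thesis by (metis red_inv_self one_in_KK append_Nil2)
  qed
qed

lemma edge_in_KK:
  assumes "delta Os v x = Some w"
  shows "red (tw v @ [x] @ invw (tw w)) \<in> KK Os"
proof -
  obtain i j where v: "v = (i,j)" by fastforce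
  obtain e1 e2 where x: "x = (e1,e2)" by fastforce
  show ?thesis using assms edge_a[of Os i j w] edge_a'[of Os i j w] edge_b[of Os i j w] edge_b'[of Os i j w]
    unfolding v x by (cases e1; cases e2) simp_all
qed

lemma walk_in_KK: "walk Os v xs = Some u \<Longrightarrow> red (tw v @ xs @ invw (tw u)) \<in> KK Os"
proof (induction xs arbitrary: v)
  case Nil then show ?case by (simp add: red_inv_self one_in_KK)
next
  case (Cons x xs)
  then obtain v1 where d: "delta Os v x = Some v1" and r: "walk Os v1 xs = Some u"
    by (auto split: option.splits)
  have "red (tw v @ (x # xs) @ invw (tw u)) = red ((tw v @ [x]) @ invw (tw v1) @ tw v1 @ (xs @ invw (tw u)))"
    by (simp only: red_cancel_mid) simp
  also have "\<dots> = red (red (tw v @ [x] @ invw (tw v1)) @ red (tw v1 @ xs @ invw (tw u)))"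
    by (simp add: red_red_left red_red_right)
  finally show ?case using mult_in_KK[OF edge_in_KK[OF d] Cons.IH[OF r]] by simp
qed

lemma Lc_sub_KK: "Lc Os \<subseteq> KK Os"
proof
  fix w assume "w \<in> Lc Os"
  then have "reduced w" "walk Os (0,0) w = Some (0,0)" by (auto simp: Lc_def)
  then show "w \<in> KK Os" using walk_in_KK[of Os "(0,0)" w "(0,0)"] by (simp add: tw_def red_reduced)
qed

lemma KK_eq: "KK Os = Lc Os"
  using KK_sub_Lc Lc_sub_KK by blast


section \<open>Orders\<close>

lemma K_eq_Lc: "K_O Os = Lc Os"
  by (simp add: K_O_eq KK_eq)

lemma conj_iff:
  fixes k :: nat
  assumes r: "reduced (u @ c @ invw u)" and c: "cyc c" and u: "walk Os (0,0) u = Some v" and k: "k \<ge> 1"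
  shows "(u @ c @ invw u) [^]\<^bsub>F2\<^esub> k \<in> K_O Os \<longleftrightarrow> walk Os v (cpow k c) = Some v"
proof -
  have eq: "(u @ c @ invw u) [^]\<^bsub>F2\<^esub> k = u @ cpow k c @ invw u" by (rule pow_conj[OF r c k])
  have rd: "reduced (u @ cpow k c @ invw u)" by (rule reduced_conj_cpow[OF r c k])
  have bk: "walk Os v (invw u) = Some (0,0)" using walk_inv[OF u] by simp
  show ?thesis
  proof
    assume "(u @ c @ invw u) [^]\<^bsub>F2\<^esub> k \<in> K_O Os"
    then have w: "walk Os (0,0) (u @ cpow k c @ invw u) = Some (0,0)"
      unfolding eq K_eq_Lc Lc_def by simp
    then obtain v' where v': "walk Os v (cpow k c) = Some v'" "walk Os v' (invw u) = Some (0,0)"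
      using u by (auto simp: walk_append split: option.splits)
    have "walk Os (0,0) u = Some v'" using walk_inv[OF v'(2)] by simp
    then have "v' = v" using u by simp
    then show "walk Os v (cpow k c) = Some v" using v' by simp
  next
    assume "walk Os v (cpow k c) = Some v"
    then have "walk Os (0,0) (u @ cpow k c @ invw u) = Some (0,0)"
      using u bk by (simp add: walk_append)
    then show "(u @ c @ invw u) [^]\<^bsub>F2\<^esub> k \<in> K_O Os"
      unfolding eq K_eq_Lc Lc_def using rd by simp
  qed
qed

lemma conj_none:
  fixes k :: nat
  assumes r: "reduced (u @ c @ invw u)" and c: "cyc c" and u: "walk Os (0,0) u = None" and k: "k \<ge> 1"
  shows "(u @ c @ invw u) [^]\<^bsub>F2\<^esub> k \<notin> K_O Os"
proof -
  have eq: "(u @ c @ invw u) [^]\<^bsub>F2\<^esub> k = u @ cpow k c @ invw u" by (rule pow_conj[OF r c k])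
  show ?thesis unfolding eq K_eq_Lc Lc_def using u by (simp add: walk_append)
qed

lemma bsum_cpow: "sum_list (map bs (cpow k c)) = int k * sum_list (map bs c)"
  by (induction k) (simp_all add: cpow_Suc cpow_def[of 0] algebra_simps)

lemma delta_b_snd: "delta Os x y \<noteq> None \<Longrightarrow> fst y \<Longrightarrow> snd x = 0"
  by (cases x; cases y; rename_tac e1 e2; case_tac e1; case_tac e2) (auto split: if_splits)

lemma b_case:
  assumes b: "\<exists>x\<in>set c. fst x" and k: "k \<ge> 1" and w: "walk Os v (cpow k c) = Some v"
  shows "walk Os v c = Some v"
proof -
  obtain k' where k': "k = Suc k'" using k by (cases k) auto
  from w obtain v' where v': "walk Os v c = Some v'" "walk Os v' (cpow k' c) = Some v"
    unfolding k' cpow_Suc by (auto simp: walk_append split: option.splits)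
  show ?thesis
  proof (cases k')
    case 0
    then show ?thesis using v' by (simp add: cpow_def)
  next
    case (Suc k'')
    from v'(2) obtain v'' where v'': "walk Os v' c = Some v''"
      unfolding Suc cpow_Suc by (auto simp: walk_append split: option.splits)
    have "int (fst v) = int (fst v) + int k * sum_list (map bs c)"
      using walk_lev[OF w] by (simp add: bsum_cpow)
    then have bs0: "sum_list (map bs c) = 0" using k by simp
    then have fv: "fst v' = fst v" using walk_lev[OF v'(1)] by simp
    obtain al y be where c: "c = al @ y # be" and y: "fst y" and al: "\<forall>z\<in>set al. \<not> fst z"
      using split_list_first_propE[OF b] by blast
    have bsal: "sum_list (map bs al) = 0"
      using al by (induction al) (auto simp: bs_def)
    from v'(1) obtain x1 where x1: "walk Os v al = Some x1" "delta Os x1 y \<noteq> None"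
      unfolding c by (auto simp: walk_append split: option.splits)
    from v'' obtain x2 where x2: "walk Os v' al = Some x2" "delta Os x2 y \<noteq> None"
      unfolding c by (auto simp: walk_append split: option.splits)
    have "fst x1 = fst v" using walk_lev[OF x1(1)] bsal by simp
    moreover have "fst x2 = fst v" using walk_lev[OF x2(1)] bsal fv by simp
    moreover have "snd x1 = 0" "snd x2 = 0" using delta_b_snd x1(2) x2(2) y by auto
    ultimately have "x1 = x2" by (simp add: prod_eq_iff)
    then have "v = v'" using walk_inj[OF x1(1)] x2(1) by simp
    then show ?thesis using v'(1) by simp
  qed
qed

lemma a_only: "reduced c \<Longrightarrow> \<forall>z\<in>set c. \<not> fst z \<Longrightarrow> \<forall>z\<in>set c. z = hd c"
proof (induction c rule: reduced.induct)
  case (3 x y ys)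
  then have "y = x" by (cases x; cases y) (auto simp: inv_letter_def)
  then show ?case using 3 by auto
qed auto

lemma cpow_replicate: "cpow k (replicate j e) = replicate (k * j) e"
  by (induction k) (simp_all add: cpow_Suc replicate_add cpow_def[of 0])

lemma closed_a:
  assumes "walk Os v (replicate l la) = Some v" "l \<ge> 1"
  shows "\<exists>n i. v = (n, i) \<and> n \<in> Os \<and> 0 < n \<and> i < n"
proof -
  obtain l' where l: "l = Suc l'" using assms by (cases l) auto
  obtain n i where v: "v = (n,i)" by fastforce
  have "delta Os (n,i) la \<noteq> None" using assms(1) unfolding l v
    by (cases "delta Os (n,i) la") (simp_all del: delta.simps)
  then show ?thesis unfolding v by (auto split: if_splits)
qed

lemma mod_closed: "0 < n \<Longrightarrow> i < n \<Longrightarrow> (i + l) mod n = i \<longleftrightarrow> n dvd (l::nat)"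
  using mod_eq_dvd_iff_nat[of i "i + l" n] by simp

lemma walk_a_closed:
  assumes "n \<in> Os" "0 < n" "i < n"
  shows "walk Os (n,i) (replicate l la) = Some (n,i) \<longleftrightarrow> n dvd l"
  using walk_a[OF assms, of l] mod_closed[OF assms(2,3), of l] by simp

lemma one_in_Os:
  fixes Os :: "nat set"
  assumes "0 \<in> Os" "Os \<noteq> {0}" "\<And>n d. n \<in> Os \<Longrightarrow> n \<noteq> 0 \<Longrightarrow> d dvd n \<Longrightarrow> d \<in> Os"
  shows "1 \<in> Os"
proof -
  obtain n where "n \<in> Os" "n \<noteq> 0" using assms(1,2) by blast
  then show ?thesis using assms(3)[of n 1] one_dvd[of n] by blast
qed

lemma Ord_in_Os:
  assumes O1: "0 \<in> Os" and O2: "Os \<noteq> {0}"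
    and O3: "\<And>n d. n \<in> Os \<Longrightarrow> n \<noteq> 0 \<Longrightarrow> d dvd n \<Longrightarrow> d \<in> Os"
    and g: "reduced g"
  shows "Ord_in F2 (K_O Os) g \<in> Os"
proof (cases "\<exists>k::nat. k \<ge> 1 \<and> g [^]\<^bsub>F2\<^esub> k \<in> K_O Os")
  case False
  have "Ord_in F2 (K_O Os) g = 0" unfolding Ord_in_def by (rule if_not_P[OF False])
  then show ?thesis using O1 by simp
next
  case True
  define m where "m = (LEAST k::nat. k \<ge> 1 \<and> g [^]\<^bsub>F2\<^esub> k \<in> K_O Os)"
  have ord: "Ord_in F2 (K_O Os) g = m" unfolding Ord_in_def m_def by (rule if_P[OF True])
  have m: "m \<ge> 1" "g [^]\<^bsub>F2\<^esub> m \<in> K_O Os"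
    using LeastI_ex[OF True] unfolding m_def by auto
  have mle: "\<And>k. k \<ge> 1 \<Longrightarrow> g [^]\<^bsub>F2\<^esub> k \<in> K_O Os \<Longrightarrow> m \<le> k"
    unfolding m_def by (rule Least_le) simp
  have one: "1 \<in> Os" by (rule one_in_Os[OF O1 O2 O3])
  show ?thesis
  proof (cases "g = []")
    case True
    have "g [^]\<^bsub>F2\<^esub> (1::nat) \<in> K_O Os"
      using True by (simp add: K_eq_Lc Lc_def)
    then have "m = 1" using mle[of 1] m(1) by simp
    then show ?thesis using ord one by simp
  next
    case False
    obtain u c where g: "g = u @ c @ invw u" and c: "cyc c" using cyc_decomp[OF g False] by blast
    have rg: "reduced (u @ c @ invw u)" using g \<open>reduced g\<close> by simp
    obtain v where u: "walk Os (0,0) u = Some v"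
      using conj_none[OF rg c _ m(1)] m(2) g by (cases "walk Os (0,0) u") auto
    have iff: "\<And>k. k \<ge> 1 \<Longrightarrow> g [^]\<^bsub>F2\<^esub> k \<in> K_O Os \<longleftrightarrow> walk Os v (cpow k c) = Some v"
      using conj_iff[OF rg c u] g by simp
    show ?thesis
    proof (cases "\<exists>x\<in>set c. fst x")
      case True
      have "walk Os v (cpow m c) = Some v" using iff[OF m(1)] m(2) by simp
      then have "walk Os v c = Some v" by (rule b_case[OF True m(1)])
      then have "g [^]\<^bsub>F2\<^esub> (1::nat) \<in> K_O Os" using iff[of 1] by (simp add: cpow_def)
      then have "m = 1" using mle[of 1] m(1) by simp
      then show ?thesis using ord one by simp
    next
      case False
      define j where "j = length c"
      have j: "j \<ge> 1" using c by (simp add: cyc_def j_def Suc_le_eq)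
      have allhd: "\<forall>z\<in>set c. z = hd c" using a_only c False by (simp add: cyc_def)
      then have crep: "c = replicate j (hd c)" unfolding j_def
        by (simp add: replicate_length_same)
      have "hd c \<in> set c" using c by (simp add: cyc_def)
      then have "\<not> fst (hd c)" using False by blast
      then have hd: "hd c = la \<or> hd c = la'"
        by (cases "hd c") auto
      have iff2: "\<And>k. k \<ge> 1 \<Longrightarrow> g [^]\<^bsub>F2\<^esub> k \<in> K_O Os \<longleftrightarrow> walk Os v (replicate (k * j) la) = Some v"
      proof -
        fix k :: nat assume k: "k \<ge> 1"
        show "g [^]\<^bsub>F2\<^esub> k \<in> K_O Os \<longleftrightarrow> walk Os v (replicate (k * j) la) = Some v"
        proof (cases "hd c = la")
          case True
          then show ?thesis using iff[OF k] crep cpow_replicate[of k j la] by simp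
        next
          case False
          then have h: "hd c = la'" using hd by simp
          have "walk Os v (replicate (k * j) la') = Some v \<longleftrightarrow> walk Os v (replicate (k * j) la) = Some v"
            using walk_inv[of Os v "replicate (k * j) la'" v] walk_inv[of Os v "replicate (k * j) la" v]
            by (auto simp: inv_letter_def)
          then show ?thesis using iff[OF k] crep h cpow_replicate[of k j la'] by simp
        qed
      qed
      have "walk Os v (replicate (m * j) la) = Some v" using iff2[OF m(1)] m(2) by simp
      moreover have "m * j \<ge> 1" using m(1) j by simp
      ultimately obtain n i where v: "v = (n,i)" and ni: "n \<in> Os" "0 < n" "i < n"
        using closed_a by blast
      have iff3: "\<And>k. k \<ge> 1 \<Longrightarrow> g [^]\<^bsub>F2\<^esub> k \<in> K_O Os \<longleftrightarrow> n dvd k * j"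
        using iff2 walk_a_closed[OF ni] v by simp
      have d1: "n dvd m * j" using iff3[OF m(1)] m(2) by simp
      have d2: "n dvd n * j" by simp
      have "n dvd gcd (m * j) (n * j)" using d1 d2 by simp
      also have "gcd (m * j) (n * j) = gcd m n * j"
        using gcd_mult_distrib_nat[of j m n] by (simp add: mult.commute)
      finally have d3: "n dvd gcd m n * j" .
      have gpos: "gcd m n \<ge> 1" using ni(2) by (simp add: Suc_le_eq)
      have "g [^]\<^bsub>F2\<^esub> (gcd m n) \<in> K_O Os" using iff3[OF gpos] d3 by simp
      then have "m \<le> gcd m n" using mle gpos by blast
      moreover have "gcd m n \<le> m" using m(1) by (simp add: gcd_le1_nat)
      ultimately have "gcd m n = m" by simp
      then have "m dvd n" by (metis gcd_dvd2)
      then show ?thesis using O3[OF ni(1)] ni(2) ord by simp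
    qed
  qed
qed

lemma Ord_zero:
  shows "Ord_in F2 (K_O Os) gen_b = 0"
proof -
  have "\<not> (\<exists>k::nat. k \<ge> 1 \<and> gen_b [^]\<^bsub>F2\<^esub> k \<in> K_O Os)"
  proof
    assume "\<exists>k::nat. k \<ge> 1 \<and> gen_b [^]\<^bsub>F2\<^esub> k \<in> K_O Os"
    then obtain k :: nat where k: "k \<ge> 1" "gen_b [^]\<^bsub>F2\<^esub> k \<in> K_O Os" by blast
    obtain k' where k': "k = Suc k'" using k by (cases k) auto
    show False using k(2) unfolding gen_b_def pow_letter K_eq_Lc Lc_def k' by simp
  qed
  then show ?thesis unfolding Ord_in_def by (rule if_not_P)
qed

lemma Ord_n:
  assumes n: "n \<in> Os" "0 < n"
  shows "Ord_in F2 (K_O Os) (replicate n lb' @ [la] @ replicate n lb) = n"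
proof -
  let ?u = "replicate n lb'"
  have g: "replicate n lb' @ [la] @ replicate n lb = ?u @ [la] @ invw ?u" by simp
  have c: "cyc [la]" by (simp add: cyc_def)
  have r: "reduced (?u @ [la] @ invw ?u)"
    using n by (simp add: reduced_append reduced_cons reduced_replicate inv_letter_def)
  have M: "Mv Os n" using n by (auto simp: Mv_def)
  have u: "walk Os (0,0) ?u = Some (n,0)" using walk_up[of Os 0 n] M by simp
  have iff: "\<And>k. k \<ge> 1 \<Longrightarrow> (?u @ [la] @ invw ?u) [^]\<^bsub>F2\<^esub> k \<in> K_O Os \<longleftrightarrow> n dvd k"
    using conj_iff[OF r c u] walk_a_closed[OF n, of 0] n(2) by (simp add: cpow_single)
  have ex: "\<exists>k::nat. k \<ge> 1 \<and> (?u @ [la] @ invw ?u) [^]\<^bsub>F2\<^esub> k \<in> K_O Os"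
    using iff[of n] n by (intro exI[of _ n]) (simp add: Suc_le_eq)
  have L: "(LEAST k::nat. k \<ge> 1 \<and> (?u @ [la] @ invw ?u) [^]\<^bsub>F2\<^esub> k \<in> K_O Os) = n"
  proof (rule Least_equality)
    show "n \<ge> 1 \<and> (?u @ [la] @ invw ?u) [^]\<^bsub>F2\<^esub> n \<in> K_O Os" using iff[of n] n by (simp add: Suc_le_eq)
  next
    fix k :: nat assume "k \<ge> 1 \<and> (?u @ [la] @ invw ?u) [^]\<^bsub>F2\<^esub> k \<in> K_O Os"
    then show "n \<le> k" using iff[of k] by (auto intro: dvd_imp_le)
  qed
  show ?thesis unfolding g Ord_in_def if_P[OF ex] by (rule L)
qed

lemma Ord_set_eq:
  assumes O1: "0 \<in> Os" and O2: "Os \<noteq> {0}"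
    and O3: "\<And>n d. n \<in> Os \<Longrightarrow> n \<noteq> 0 \<Longrightarrow> d dvd n \<Longrightarrow> d \<in> Os"
  shows "Ord_set F2 (K_O Os) = Os"
proof
  show "Ord_set F2 (K_O Os) \<subseteq> Os"
    unfolding Ord_set_def using Ord_in_Os[OF O1 O2 O3] by auto
next
  show "Os \<subseteq> Ord_set F2 (K_O Os)"
  proof
    fix n assume n: "n \<in> Os"
    show "n \<in> Ord_set F2 (K_O Os)"
    proof (cases "n = 0")
      case True
      then show ?thesis unfolding Ord_set_def using Ord_zero[of Os]
        by (intro image_eqI[of _ _ gen_b]) (auto simp: gen_b_def)
    next
      case False
      have "reduced (replicate n lb' @ [la] @ replicate n lb)"
        using False by (simp add: reduced_append reduced_cons reduced_replicate inv_letter_def)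
      then show ?thesis unfolding Ord_set_def using Ord_n[of n Os] n False
        by (intro image_eqI[of _ _ "replicate n lb' @ [la] @ replicate n lb"]) auto
    qed
  qed
qed


section \<open>Parity and rank\<close>

inductive_set xspan :: "(nat \<Rightarrow> bool) set \<Rightarrow> (nat \<Rightarrow> bool) set" for Y where
  span_zero: "(\<lambda>k. False) \<in> xspan Y"
| span_step: "f \<in> xspan Y \<Longrightarrow> x \<in> Y \<Longrightarrow> (\<lambda>k. f k \<noteq> x k) \<in> xspan Y"

lemma span_incl: "x \<in> Y \<Longrightarrow> x \<in> xspan Y"
  using span_step[OF span_zero, of x Y] by simp

lemma span_add: "g \<in> xspan Y \<Longrightarrow> f \<in> xspan Y \<Longrightarrow> (\<lambda>k. f k \<noteq> g k) \<in> xspan Y"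
proof (induction g rule: xspan.induct)
  case span_zero then show ?case by simp
next
  case (span_step g x)
  have "(\<lambda>k. (f k \<noteq> g k) \<noteq> x k) \<in> xspan Y" by (rule xspan.span_step[OF span_step.IH[OF span_step.prems] span_step.hyps(2)])
  moreover have "(\<lambda>k. (f k \<noteq> g k) \<noteq> x k) = (\<lambda>k. f k \<noteq> (g k \<noteq> x k))" by auto
  ultimately show ?case by simp
qed

definition xs_of :: "(nat \<Rightarrow> bool) set \<Rightarrow> nat \<Rightarrow> bool" where
  "xs_of T = (\<lambda>k. odd (card {y\<in>T. y k}))"

lemma xs_of_toggle:
  assumes "finite T"
  shows "(\<lambda>k. xs_of T k \<noteq> x k) = xs_of (if x \<in> T then T - {x} else insert x T)"
proof
  fix k
  show "(xs_of T k \<noteq> x k) = xs_of (if x \<in> T then T - {x} else insert x T) k"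
  proof (cases "x k")
    case False
    have "{y \<in> (if x \<in> T then T - {x} else insert x T). y k} = {y\<in>T. y k}" using False by auto
    then show ?thesis using False by (simp add: xs_of_def)
  next
    case True
    show ?thesis
    proof (cases "x \<in> T")
      case True': True
      have e: "{y \<in> T - {x}. y k} = {y\<in>T. y k} - {x}" by auto
      have xin: "x \<in> {y\<in>T. y k}" using True True' by simp
      have fin: "finite {y\<in>T. y k}" using assms by simp
      have "card {y\<in>T. y k} = Suc (card ({y\<in>T. y k} - {x}))"
        by (rule card_Suc_Diff1[OF fin xin, symmetric])
      then show ?thesis using True True' e by (simp add: xs_of_def)
    next
      case False
      have e: "{y \<in> insert x T. y k} = insert x {y\<in>T. y k}" using True by auto
      have "card (insert x {y\<in>T. y k}) = Suc (card {y\<in>T. y k})" using False assms by simp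
      then show ?thesis using True False e by (simp add: xs_of_def)
    qed
  qed
qed

lemma span_sub: "f \<in> xspan Y \<Longrightarrow> finite Y \<Longrightarrow> \<exists>T\<subseteq>Y. f = xs_of T"
proof (induction f rule: xspan.induct)
  case span_zero
  show ?case by (intro exI[of _ "{}"]) (simp add: xs_of_def)
next
  case (span_step f x)
  then obtain T where T: "T \<subseteq> Y" "f = xs_of T" by blast
  have fin: "finite T" using T(1) span_step.prems finite_subset by blast
  show ?case using xs_of_toggle[OF fin, of x] T span_step.hyps(2)
    by (intro exI[of _ "if x \<in> T then T - {x} else insert x T"]) auto
qed

lemma span_card: "finite Y \<Longrightarrow> finite (xspan Y) \<and> card (xspan Y) \<le> 2 ^ card Y"
proof -
  assume fin: "finite Y"
  have sub: "xspan Y \<subseteq> xs_of ` Pow Y" using span_sub fin by blast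
  have "finite (xs_of ` Pow Y)" using fin by simp
  moreover have "card (xs_of ` Pow Y) \<le> 2 ^ card Y"
    using card_image_le[of "Pow Y" xs_of] fin by (simp add: card_Pow)
  ultimately show ?thesis using sub by (meson card_mono finite_subset order_trans)
qed

lemma par_Lc_mult:
  assumes "w1 \<in> Lc Os" "w2 \<in> Lc Os"
  shows "par Os (0,0) (red (w1 @ w2)) = (\<lambda>k. par Os (0,0) w1 k \<noteq> par Os (0,0) w2 k)"
proof -
  have w1: "walk Os (0,0) w1 = Some (0,0)" and w2: "walk Os (0,0) w2 = Some (0,0)"
    using assms by (auto simp: Lc_def)
  have "walk Os (0,0) (w1 @ w2) = Some (0,0)" using w1 w2 by (simp add: walk_append)
  then have "par Os (0,0) (red (w1 @ w2)) = par Os (0,0) (w1 @ w2)" using walk_red by blast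
  also have "\<dots> = (\<lambda>k. par Os (0,0) w1 k \<noteq> par Os (0,0) w2 k)"
    using par_append[OF w1] by auto
  finally show ?thesis .
qed

lemma par_Lc_inv:
  assumes "w \<in> Lc Os"
  shows "par Os (0,0) (invw w) = par Os (0,0) w"
  using assms walk_inv[of Os "(0,0)" w "(0,0)"] by (auto simp: Lc_def)

lemma par_up: "Mv Os (i + k) \<Longrightarrow> par Os (i,0) (replicate k lb') = (\<lambda>_. False)"
proof (induction k arbitrary: i)
  case (Suc k)
  have m: "Mv Os (Suc i)" using Suc.prems by (rule Mv_mono) simp
  have d: "delta Os (i,0) lb' = Some (Suc i, 0)" using m by simp
  have m2: "Mv Os (Suc i + k)" using Suc.prems by simp
  have r: "par Os (Suc i, 0) (replicate k lb') = (\<lambda>_. False)" by (rule Suc.IH[OF m2])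
  show ?case using d r by simp
qed simp

lemma par_down: "Mv Os m \<Longrightarrow> k \<le> m \<Longrightarrow> par Os (m,0) (replicate k lb) = (\<lambda>_. False)"
proof (induction k arbitrary: m)
  case (Suc k)
  then obtain m' where m: "m = Suc m'" by (cases m) auto
  have M: "Mv Os m'" using Suc.prems(1) unfolding m by (rule Mv_mono) simp
  have d: "delta Os (Suc m',0) lb = Some (m', 0)" using Suc.prems(1) unfolding m by simp
  have r: "par Os (m',0) (replicate k lb) = (\<lambda>_. False)"
    using Suc.IH[OF M] Suc.prems(2) unfolding m by simp
  show ?case unfolding m using d r by simp
qed simp

lemma par_a: "n \<in> Os \<Longrightarrow> j < n \<Longrightarrow> j + k \<le> n \<Longrightarrow>
   par Os (n,j) (replicate k la) = (\<lambda>m. m = n \<and> j + k = n)"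
proof (induction k arbitrary: j)
  case 0 then show ?case by simp
next
  case (Suc k)
  have d: "delta Os (n,j) la = Some (n, Suc j mod n)" using Suc.prems by simp
  show ?case
  proof (cases "Suc j = n")
    case True
    then have "k = 0" using Suc.prems by simp
    then show ?thesis using d True by simp
  next
    case False
    then have sj: "Suc j < n" using Suc.prems by simp
    then have d2: "delta Os (n,j) la = Some (n, Suc j)" using d by simp
    have "par Os (n, Suc j) (replicate k la) = (\<lambda>m. m = n \<and> Suc j + k = n)"
      using Suc.IH[OF Suc.prems(1) sj] Suc.prems(3) by simp
    then show ?thesis using d2 False by auto
  qed
qed

lemma par_genw:
  assumes n: "n \<in> Os" "0 < n"
  shows "par Os (0,0) (genw n) = (\<lambda>m. m = n)"
proof -
  have M: "Mv Os n" using n by (auto simp: Mv_def)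
  have w1: "walk Os (0,0) (replicate n lb') = Some (n, 0)" using walk_up[of Os 0 n] M by simp
  have w2: "walk Os (n,0) (replicate n la) = Some (n, 0)" using walk_a[OF n, of 0 n] n by simp
  have p1: "par Os (0,0) (replicate n lb') = (\<lambda>_. False)" using par_up[of Os 0 n] M by simp
  have p2: "par Os (n,0) (replicate n la) = (\<lambda>m. m = n)" using par_a[OF n(1), of 0 n] n by simp
  have p3: "par Os (n,0) (replicate n lb) = (\<lambda>_. False)" using par_down[OF M, of n] by simp
  show ?thesis
  proof
    fix m
    show "par Os (0,0) (genw n) m = (m = n)"
      unfolding genw_def using par_append[OF w1, of "replicate n la @ replicate n lb" m]
        par_append[OF w2, of "replicate n lb" m] p1 p2 p3 by simp
  qed
qed

lemma par_generate:
  assumes S: "S \<subseteq> carrier F2" "S \<subseteq> Lc Os" and h: "h \<in> generate F2 S"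
  shows "h \<in> Lc Os \<and> par Os (0,0) h \<in> xspan (par Os (0,0) ` S)"
  using h
proof (induction h rule: generate.induct)
  case one
  then show ?case using subgroup.one_closed[OF Lc_subgroup[of Os]] by (simp add: span_zero)
next
  case (incl h)
  then show ?case using S by (auto intro: span_incl)
next
  case (inv h)
  then have "h \<in> Lc Os" "reduced h" using S by auto
  then show ?case using par_Lc_inv[of h Os] subgroup.m_inv_closed[OF Lc_subgroup \<open>h \<in> Lc Os\<close>] inv
    by (auto simp: inv_F2 intro: span_incl)
next
  case (eng h1 h2)
  then have l1: "h1 \<in> Lc Os" and l2: "h2 \<in> Lc Os"
    and s1: "par Os (0,0) h1 \<in> xspan (par Os (0,0) ` S)"
    and s2: "par Os (0,0) h2 \<in> xspan (par Os (0,0) ` S)" by auto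
  have "(\<lambda>k. par Os (0,0) h1 k \<noteq> par Os (0,0) h2 k) \<in> xspan (par Os (0,0) ` S)"
    by (rule span_add[OF s2 s1])
  then have "par Os (0,0) (h1 \<otimes>\<^bsub>F2\<^esub> h2) \<in> xspan (par Os (0,0) ` S)"
    using par_Lc_mult[OF l1 l2] by simp
  moreover have "h1 \<otimes>\<^bsub>F2\<^esub> h2 \<in> Lc Os"
    by (rule subgroup.m_closed[OF Lc_subgroup l1 l2])
  ultimately show ?case by simp
qed

lemma indicator_span:
  assumes "finite T" "\<And>n. n \<in> T \<Longrightarrow> (\<lambda>m. m = n) \<in> xspan Y"
  shows "(\<lambda>m. m \<in> T) \<in> xspan Y"
  using assms
proof (induction T rule: finite_induct)
  case empty then show ?case by (simp add: span_zero)
next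
  case (insert n T)
  have "(\<lambda>m. (m = n) \<noteq> (m \<in> T)) \<in> xspan Y"
    using span_add[OF insert.IH insert.prems[of n]] insert.prems by auto
  moreover have "(\<lambda>m. (m = n) \<noteq> (m \<in> T)) = (\<lambda>m. m \<in> insert n T)" using insert.hyps by auto
  ultimately show ?case by simp
qed

lemma rank_lower:
  assumes O1: "0 \<in> Os" and S: "S \<subseteq> carrier F2" "generate F2 S = K_O Os"
  shows "Os - {0} \<lesssim> S"
proof (cases "finite S")
  case False
  have "Os - {0} \<lesssim> (UNIV :: nat set)" by (rule subset_imp_lepoll) simp
  also have "(UNIV :: nat set) \<lesssim> S" using False infinite_le_lepoll by blast
  finally show ?thesis .
next
  case True
  have SL: "S \<subseteq> Lc Os" using S generate.incl[of _ S F2] K_eq_Lc by blast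
  define Y where "Y = par Os (0,0) ` S"
  have finY: "finite Y" using True by (simp add: Y_def)
  have cY: "card Y \<le> card S" using True by (simp add: Y_def card_image_le)
  have sing: "\<And>n. n \<in> Os - {0} \<Longrightarrow> (\<lambda>m. m = n) \<in> xspan Y"
  proof -
    fix n assume n: "n \<in> Os - {0}"
    have "genw n \<in> generate F2 S" using S(2) genw_in_KK[of n Os] n by (simp add: K_O_eq)
    then have "par Os (0,0) (genw n) \<in> xspan Y" using par_generate[OF S(1) SL] by (simp add: Y_def)
    then show "(\<lambda>m. m = n) \<in> xspan Y" using par_genw[of n Os] n by simp
  qed
  have fsp: "finite (xspan Y)" and csp: "card (xspan Y) \<le> 2 ^ card Y" using span_card[OF finY] by auto
  have injs: "inj_on (\<lambda>n m. m = n) (Os - {0})" by (auto simp: inj_on_def dest: fun_cong)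
  have finO: "finite (Os - {0})"
    by (rule inj_on_finite[OF injs _ fsp]) (auto intro: sing)
  have injP: "inj_on (\<lambda>T m. m \<in> T) (Pow (Os - {0}))" by (rule inj_onI) (simp add: fun_eq_iff set_eq_iff)
  have "(\<lambda>T m. m \<in> T) ` Pow (Os - {0}) \<subseteq> xspan Y"
  proof
    fix f assume "f \<in> (\<lambda>T m. m \<in> T) ` Pow (Os - {0})"
    then obtain T where T: "T \<subseteq> Os - {0}" "f = (\<lambda>m. m \<in> T)" by auto
    have "finite T" using T finO finite_subset by blast
    moreover have "\<And>n. n \<in> T \<Longrightarrow> (\<lambda>m. m = n) \<in> xspan Y" using T(1) sing by blast
    ultimately have "(\<lambda>m. m \<in> T) \<in> xspan Y" by (rule indicator_span)
    then show "f \<in> xspan Y" using T(2) by simp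
  qed
  then have "card ((\<lambda>T m. m \<in> T) ` Pow (Os - {0})) \<le> card (xspan Y)" using fsp by (rule card_mono[rotated])
  then have "card (Pow (Os - {0})) \<le> card (xspan Y)" using card_image[OF injP] by simp
  then have a: "(2::nat) ^ card (Os - {0}) \<le> card (xspan Y)" using finO by (simp add: card_Pow)
  have b: "(2::nat) ^ card Y \<le> 2 ^ card S" by (rule power_increasing[OF cY]) simp
  have "(2::nat) ^ card (Os - {0}) \<le> 2 ^ card S" using a b csp by linarith
  then have "card (Os - {0}) \<le> card S" by simp
  then show ?thesis using finO True lepoll_iff_card_le by blast
qed

lemma length_genw: "length (genw n) = 3 * n"
  by (simp add: genw_def)

lemma rank_upper:
  assumes O1: "0 \<in> Os"
  shows "genw ` (Os - {0}) \<subseteq> carrier F2 \<and> generate F2 (genw ` (Os - {0})) = K_O Os \<and> genw ` (Os - {0}) \<approx> Os - {0}"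
proof (intro conjI)
  show "genw ` (Os - {0}) \<subseteq> carrier F2" using reduced_genw by auto
  have inj: "inj_on genw (Os - {0})"
    by (rule inj_onI) (metis length_genw mult_left_cancel zero_neq_numeral)
  then show "genw ` (Os - {0}) \<approx> Os - {0}"
    using eqpoll_sym[of "Os - {0}" "genw ` (Os - {0})"] unfolding eqpoll_def
    by (meson bij_betw_imageI)
  have sub: "genw ` (Os - {0}) \<subseteq> carrier F2" using reduced_genw by auto
  have "generate F2 (genw ` (Os - {0})) \<subseteq> generate F2 (genw ` Os)"
    by (rule F.mono_generate) auto
  moreover have "generate F2 (genw ` Os) \<subseteq> generate F2 (genw ` (Os - {0}))"
  proof (rule F.generate_subgroup_incl[OF _ F.generate_is_subgroup[OF sub]])
    show "genw ` Os \<subseteq> generate F2 (genw ` (Os - {0}))"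
    proof
      fix x assume "x \<in> genw ` Os"
      then obtain n where n: "n \<in> Os" "x = genw n" by auto
      show "x \<in> generate F2 (genw ` (Os - {0}))"
      proof (cases "n = 0")
        case True
        then have "x = \<one>\<^bsub>F2\<^esub>" using n by (simp add: genw_def)
        then show ?thesis using one_in_KK[of "Os - {0}"] by simp
      next
        case False
        then show ?thesis using n by (auto intro: generate.incl)
      qed
    qed
  qed
  ultimately show "generate F2 (genw ` (Os - {0})) = K_O Os" by (simp add: K_O_eq)
qed

theorem proposition4p2:
  fixes Os :: "nat set"
  assumes "0 \<in> Os"
    and "Os \<noteq> {0}"
    and "\<And>n d. n \<in> Os \<Longrightarrow> n \<noteq> 0 \<Longrightarrow> d dvd n \<Longrightarrow> d \<in> Os"
  shows "Ord_set F2 (K_O Os) = Os \<and> rank_eq_card F2 (K_O Os) (Os - {0})"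
proof
  show "Ord_set F2 (K_O Os) = Os" by (rule Ord_set_eq[OF assms])
  show "rank_eq_card F2 (K_O Os) (Os - {0})"
    unfolding rank_eq_card_def
  proof
    show "\<exists>S. S \<subseteq> carrier F2 \<and> generate F2 S = K_O Os \<and> S \<approx> Os - {0}"
      using rank_upper[OF assms(1)] by blast
    show "\<forall>S. S \<subseteq> carrier F2 \<and> generate F2 S = K_O Os \<longrightarrow> Os - {0} \<lesssim> S"
      using rank_lower[OF assms(1)] by blast
  qed
qed

end
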